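(* Let $\mathsf{F}(X)=X\times X$ (with $\mathsf{F}h=h\times h$) and $\mathsf{B}=\mathcal{P}_{fin}$ the finite covariant powerset functor ($\mathsf{B}h(S)=h[S]$). Then the category $\mathit{Dialg}(\mathsf{F},\mathsf{B})$ has no final object.
   Context: For functors $\mathsf{F},\mathsf{B}:\mathbf{Set}\to\mathbf{Set}$, an $(\mathsf{F},\mathsf{B})$-dialgebra is a pair $(X,f)$ with $X$ a set (the carrier) and $f:\mathsf{F}X\to\mathsf{B}X$ a function. A homomorphism $h:(X,f)\to(Y,g)$ is a function $h:X\to Y$ with $g\circ\mathsf{F}h=\mathsf{B}h\circ f$. Dialgebras and homomorphisms form the category $\mathit{Dialg}(\mathsf{F},\mathsf{B})$. *)

theory Defs
  imports "HOL-Library.FuncSet"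
begin

definition dialg :: "'a set \<Rightarrow> ('a \<times> 'a \<Rightarrow> 'a set) \<Rightarrow> bool" where
  "dialg X f \<longleftrightarrow> (\<forall>x\<in>X. \<forall>y\<in>X. finite (f (x, y)) \<and> f (x, y) \<subseteq> X)"

text \<open>Homomorphisms (X,f) \<rightarrow> (Y,g): functions X \<rightarrow> Y (extensional, so that
  equality of homomorphisms is equality as functions on X) with
  g \<circ> (h \<times> h) = h[-] \<circ> f.\<close>
definition dialg_hom :: "'a set \<Rightarrow> ('a \<times> 'a \<Rightarrow> 'a set) \<Rightarrow> 'b set \<Rightarrow> ('b \<times> 'b \<Rightarrow> 'b set)
    \<Rightarrow> ('a \<Rightarrow> 'b) \<Rightarrow> bool" where
  "dialg_hom X f Y g h \<longleftrightarrow> h \<in> X \<rightarrow>\<^sub>E Y \<and> (\<forall>x\<in>X. \<forall>y\<in>X. g (h x, h y) = h ` f (x, y))"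

end

theory Submission
  imports Defs
begin

theorem mainTheorem2:
  shows "\<not> (\<exists>(X :: 'a set) f. dialg X f \<and>
            (\<forall>(Y :: 'a set set) g. dialg Y g \<longrightarrow> (\<exists>!h. dialg_hom Y g X f h)))"
proof
  assume "\<exists>(X :: 'a set) f. dialg X f \<and>
            (\<forall>(Y :: 'a set set) g. dialg Y g \<longrightarrow> (\<exists>!h. dialg_hom Y g X f h))"
  then obtain X :: "'a set" and f where fin:
    "\<forall>(Y :: 'a set set) g. dialg Y g \<longrightarrow> (\<exists>!h. dialg_hom Y g X f h)" by blast
  define Y2 :: "'a set set" where "Y2 = {{}, UNIV}"
  define g2 :: "'a set \<times> 'a set \<Rightarrow> 'a set set" where
    "g2 = (\<lambda>p. if fst p = snd p then {} else {fst p})"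
  have ne: "({}::'a set) \<noteq> UNIV" by auto
  have "dialg Y2 g2" unfolding dialg_def Y2_def g2_def by auto
  then obtain h where h: "dialg_hom Y2 g2 X f h" using fin by blast
  define a where "a = h {}"
  define b where "b = h UNIV"
  have aX: "a \<in> X" and bX: "b \<in> X" using h unfolding dialg_hom_def a_def b_def Y2_def by auto
  have H: "\<forall>x\<in>Y2. \<forall>y\<in>Y2. f (h x, h y) = h ` g2 (x, y)" using h unfolding dialg_hom_def by blast
  have m1: "{} \<in> Y2" and m2: "UNIV \<in> Y2" unfolding Y2_def by auto
  have faa: "f (a, a) = {}" using H m1 unfolding a_def g2_def by simp
  have fbb: "f (b, b) = {}" using H m2 unfolding b_def g2_def by simp
  have fab: "f (a, b) = {a}" using H m1 m2 ne unfolding a_def b_def g2_def by simp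
  define Y1 :: "'a set set" where "Y1 = {{}}"
  define g1 :: "'a set \<times> 'a set \<Rightarrow> 'a set set" where "g1 = (\<lambda>p. {})"
  have "dialg Y1 g1" unfolding dialg_def Y1_def g1_def by auto
  hence u: "\<exists>!h. dialg_hom Y1 g1 X f h" using fin by blast
  have ha: "dialg_hom Y1 g1 X f (\<lambda>y. if y \<in> Y1 then a else undefined)"
    unfolding dialg_hom_def Y1_def g1_def using aX faa by (auto simp: PiE_def extensional_def)
  have hb: "dialg_hom Y1 g1 X f (\<lambda>y. if y \<in> Y1 then b else undefined)"
    unfolding dialg_hom_def Y1_def g1_def using bX fbb by (auto simp: PiE_def extensional_def)
  have "(\<lambda>y. if y \<in> Y1 then a else undefined) = (\<lambda>y. if y \<in> Y1 then b else undefined)"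
    using u ha hb by blast
  hence "a = b" unfolding Y1_def by (metis singletonI)
  thus False using faa fab by simp
qed

end
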